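(* Let $N\ge2$, $x_1>\cdots>x_N$ real, and $\mathbf A\in\mathbb R^{N\times N}$ with $\mathbf A_{i,n}=|x_i-x_n|$. Then $\mathbf A$ is invertible and $\mathbf A^{-1}=\frac12\mathbf P\mathbf E\mathbf D\mathbf E$, where $$\mathbf P=\begin{pmatrix}\mathbf 0^T & 1\\ I_{N-1} & \mathbf 0\end{pmatrix},\qquad \mathbf E=\begin{pmatrix}\Delta & -\mathbf e\\ -\mathbf e_1^T & -1\end{pmatrix},$$ $\mathbf D\in\mathbb R^{N\times N}$ is diagonal with $\mathbf D_{i,i}=\frac1{x_i-x_{i+1}}$ for $i\in[N-1]$ and $\mathbf D_{N,N}=\frac1{x_1-x_N}$, $\mathbf 0\in\mathbb R^{N-1}$ is the zero vector, $\mathbf e=(0,\dots,0,1)^T\in\mathbb R^{N-1}$ and $\mathbf e_1=(1,0,\dots,0)^T\in\mathbb R^{N-1}$.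
   Context: $\Delta\in\mathbb R^{(N-1)\times(N-1)}$ is the finite difference matrix with $\Delta_{i,i}=1$, $\Delta_{i,i+1}=-1$, and all other entries $0$; $I_{N-1}$ is the identity matrix. *)

theory Defs
  imports "Jordan_Normal_Form.Matrix"
begin

text \<open>Indices are 0-based: the paper's index i in [N] corresponds to i-1 here.
  The points x_1 > ... > x_N are x 0 > ... > x (N-1).\<close>

definition distA :: "nat \<Rightarrow> (nat \<Rightarrow> real) \<Rightarrow> real mat" where
  "distA N x = mat N N (\<lambda>(i, n). \<bar>x i - x n\<bar>)"

text \<open>P = [0^T 1; I_{N-1} 0]\<close>
definition permP :: "nat \<Rightarrow> real mat" where
  "permP N = mat N N (\<lambda>(i, j).
     if i = 0 then (if j = N - 1 then 1 else 0)
     else (if j < N - 1 \<and> j = i - 1 then 1 else 0))"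

text \<open>E = [Delta, -e; -e_1^T, -1], Delta the (N-1)x(N-1) finite difference matrix.\<close>
definition matE :: "nat \<Rightarrow> real mat" where
  "matE N = mat N N (\<lambda>(i, j).
     if i < N - 1 \<and> j < N - 1 then
        (if j = i then 1 else if j = i + 1 then -1 else 0)
     else if i < N - 1 \<and> j = N - 1 then (if i = N - 2 then -1 else 0)
     else if i = N - 1 \<and> j < N - 1 then (if j = 0 then -1 else 0)
     else -1)"

definition matD :: "nat \<Rightarrow> (nat \<Rightarrow> real) \<Rightarrow> real mat" where
  "matD N x = mat N N (\<lambda>(i, j).
     if i = j then (if i < N - 1 then 1 / (x i - x (i + 1)) else 1 / (x 0 - x (N - 1)))
     else 0)"

end

theory Submission
  imports Defs "Jordan_Normal_Form.Determinant"
begin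

lemma E_entry:
  assumes "N \<ge> 2" "i < N" "k < N"
  shows "matE N $$ (i,k) = (if i < N - 1 then of_bool (k = i) - of_bool (k = i + 1)
            else - of_bool (k = 0) - of_bool (k = N - 1))"
  using assms unfolding matE_def by auto

lemma P_entry:
  assumes "N \<ge> 2" "i < N" "k < N"
  shows "permP N $$ (i,k) = (if i = 0 then of_bool (k = N - 1) else of_bool (k = i - 1))"
  using assms unfolding permP_def by auto

lemma D_entry:
  assumes "i < N" "k < N"
  shows "matD N x $$ (i,k) = of_bool (k = i) * (if i < N - 1 then 1 / (x i - x (i + 1)) else 1 / (x 0 - x (N - 1)))"
  using assms unfolding matD_def by auto

lemma sum_ofb: "k0 < (N::nat) \<Longrightarrow> (\<Sum>k = 0..<N. of_bool (k = k0) * (f k :: real)) = f k0"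
proof -
  assume h: "k0 < N"
  have "(\<Sum>k = 0..<N. of_bool (k = k0) * f k) = (\<Sum>k = 0..<N. if k = k0 then f k else 0)"
    by (rule sum.cong) auto
  also have "\<dots> = f k0" using h by (simp add: sum.delta)
  finally show ?thesis .
qed

lemma E_mult:
  assumes "N \<ge> 2" "i < N" "n < dim_col X" "dim_row X = N"
  shows "(matE N * X) $$ (i,n) = (if i < N - 1 then X $$ (i,n) - X $$ (i+1,n)
            else - X $$ (0,n) - X $$ (N-1,n))"
proof -
  have "(matE N * X) $$ (i,n) = (\<Sum>k = 0..<N. matE N $$ (i,k) * X $$ (k,n))"
    using assms by (simp add: matE_def scalar_prod_def)
  also have "\<dots> = (if i < N - 1 then (\<Sum>k = 0..<N. of_bool (k = i) * X $$ (k,n)) - (\<Sum>k = 0..<N. of_bool (k = i+1) * X $$ (k,n))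
     else - (\<Sum>k = 0..<N. of_bool (k = 0) * X $$ (k,n)) - (\<Sum>k = 0..<N. of_bool (k = N-1) * X $$ (k,n)))"
    using assms by (auto simp: E_entry left_diff_distrib sum_subtractf sum_negf intro!: sum.cong)
  also have "\<dots> = (if i < N - 1 then X $$ (i,n) - X $$ (i+1,n)
            else - X $$ (0,n) - X $$ (N-1,n))"
    using assms by (simp add: sum_ofb)
  finally show ?thesis .
qed

lemma P_mult:
  assumes "N \<ge> 2" "i < N" "n < dim_col X" "dim_row X = N"
  shows "(permP N * X) $$ (i,n) = (if i = 0 then X $$ (N-1,n) else X $$ (i-1,n))"
proof -
  have "(permP N * X) $$ (i,n) = (\<Sum>k = 0..<N. permP N $$ (i,k) * X $$ (k,n))"
    using assms by (simp add: permP_def scalar_prod_def)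
  also have "\<dots> = (if i = 0 then (\<Sum>k = 0..<N. of_bool (k = N-1) * X $$ (k,n))
     else (\<Sum>k = 0..<N. of_bool (k = i-1) * X $$ (k,n)))"
    using assms by (auto simp: P_entry intro!: sum.cong)
  also have "\<dots> = (if i = 0 then X $$ (N-1,n) else X $$ (i-1,n))"
    using assms by (simp add: sum_ofb)
  finally show ?thesis .
qed

lemma D_mult:
  assumes "i < N" "n < dim_col X" "dim_row X = N"
  shows "(matD N x * X) $$ (i,n) = (if i < N - 1 then 1 / (x i - x (i + 1)) else 1 / (x 0 - x (N - 1))) * X $$ (i,n)"
proof -
  have "(matD N x * X) $$ (i,n) = (\<Sum>k = 0..<N. matD N x $$ (i,k) * X $$ (k,n))"
    using assms by (simp add: matD_def scalar_prod_def)
  also have "\<dots> = (\<Sum>k = 0..<N. of_bool (k = i) * ((if i < N - 1 then 1 / (x i - x (i + 1)) else 1 / (x 0 - x (N - 1))) * X $$ (k,n)))"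
    using assms by (intro sum.cong) (auto simp: D_entry)
  also have "\<dots> = (if i < N - 1 then 1 / (x i - x (i + 1)) else 1 / (x 0 - x (N - 1))) * X $$ (i,n)"
    by (rule sum_ofb[OF assms(1)])
  finally show ?thesis .
qed

theorem lemma22:
  fixes N :: nat and x :: "nat \<Rightarrow> real"
  assumes "N \<ge> 2"
    and "\<And>i j. i < j \<Longrightarrow> j < N \<Longrightarrow> x j < x i"
  shows "invertible_mat (distA N x) \<and>
         inverts_mat (distA N x) ((1/2) \<cdot>\<^sub>m (permP N * matE N * matD N x * matE N)) \<and>
         inverts_mat ((1/2) \<cdot>\<^sub>m (permP N * matE N * matD N x * matE N)) (distA N x)"
proof -
  let ?A = "distA N x" and ?P = "permP N" and ?E = "matE N" and ?D = "matD N x"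
  have cA: "?A \<in> carrier_mat N N" and cP: "?P \<in> carrier_mat N N" and cE: "?E \<in> carrier_mat N N"
    and cD: "?D \<in> carrier_mat N N"
    by (auto simp: distA_def permP_def matE_def matD_def)
  have le: "x j \<le> x i" if "i \<le> j" "j < N" for i j
    using assms(2)[of i j] that by (cases "i = j") auto
  define F where "F = mat N N (\<lambda>(i,n). if i < N - 1 then (if n \<le> i then -1 else 1::real) else -1)"
  have EA: "?D * (?E * ?A) = F"
  proof (rule eq_matI)
    fix i n assume i: "i < dim_row F" and n: "n < dim_col F"
    hence i: "i < N" and n: "n < N" by (auto simp: F_def)
    have EAe: "(?E * ?A) $$ (k,n) = (if k < N - 1 then (if n \<le> k then -(x k - x (k+1)) else x k - x (k+1))
          else -(x 0 - x (N-1)))" if "k < N" for k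
    proof -
      have "(?E * ?A) $$ (k,n) = (if k < N - 1 then ?A $$ (k,n) - ?A $$ (k+1,n)
            else - ?A $$ (0,n) - ?A $$ (N-1,n))"
        using E_mult[OF assms(1) that] n cA by auto
      also have "\<dots> = (if k < N - 1 then (if n \<le> k then -(x k - x (k+1)) else x k - x (k+1))
          else -(x 0 - x (N-1)))"
      proof (cases "k < N - 1")
        case True
        then show ?thesis
        proof (cases "n \<le> k")
          case True
          have k1: "k + 1 < N" "k < N" using \<open>k < N - 1\<close> by auto
          have "x k \<le> x n" "x (k+1) < x k" using le[of n k] assms(2)[of k "k+1"] k1 True by auto
          then show ?thesis using True k1 n \<open>k < N - 1\<close> by (simp add: distA_def abs_if)
        next
          case False
          have k1: "k + 1 < N" "k < N" using \<open>k < N - 1\<close> by auto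
          have "x (k+1) \<ge> x n" "x (k+1) < x k" using le[of "k+1" n] assms(2)[of k "k+1"] k1 False n by auto
          then show ?thesis using False k1 n \<open>k < N - 1\<close> by (simp add: distA_def abs_if)
        qed
      next
        case False
        have "x n \<le> x 0" "x (N-1) \<le> x n" using le[of 0 n] le[of n "N-1"] n by auto
        then show ?thesis using False n assms(1) by (simp add: distA_def abs_if)
      qed
      finally show ?thesis .
    qed
    have pos: "x i - x (i+1) > 0" if "i < N - 1" using assms(2)[of i "i+1"] that by auto
    have pos2: "x 0 - x (N-1) > 0" using assms(2)[of 0 "N-1"] assms(1) by auto
    have dm: "(?D * (?E * ?A)) $$ (i,n) = (if i < N - 1 then 1 / (x i - x (i + 1)) else 1 / (x 0 - x (N - 1))) * (?E * ?A) $$ (i,n)"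
      using D_mult[of i N n "?E * ?A" x] i n cA cE by auto
    show "(?D * (?E * ?A)) $$ (i,n) = F $$ (i,n)"
    proof (cases "i < N - 1")
      case True
      then have "x i - x (i+1) \<noteq> 0" using pos by auto
      then have "(x (Suc i) - x i) / (x i - x (Suc i)) = - 1" by (simp add: field_simps)
      then show ?thesis using True dm EAe[OF i] i n \<open>x i - x (i+1) \<noteq> 0\<close> by (simp add: F_def)
    next
      case False
      then have "x 0 - x (N-1) \<noteq> 0" using pos2 by auto
      then have "(x (N - Suc 0) - x 0) / (x 0 - x (N - Suc 0)) = - 1" by (simp add: field_simps)
      then show ?thesis using False dm EAe[OF i] i n by (simp add: F_def)
    qed
  qed (auto simp: F_def matD_def distA_def)
  define H where "H = mat N N (\<lambda>(i,n). if i < N - 1 then of_bool (n = i + 1) else (of_bool (n = 0) :: real))"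
  have EF: "?E * F = 2 \<cdot>\<^sub>m H"
  proof (rule eq_matI)
    fix i n assume "i < dim_row (2 \<cdot>\<^sub>m H)" "n < dim_col (2 \<cdot>\<^sub>m H)"
    hence i: "i < N" and n: "n < N" by (auto simp: H_def)
    show "(?E * F) $$ (i,n) = (2 \<cdot>\<^sub>m H) $$ (i,n)"
      using E_mult[OF assms(1) i, of n F] i n assms(1) by (auto simp: F_def H_def)
  qed (auto simp: F_def H_def matE_def)
  have PH: "?P * H = 1\<^sub>m N"
  proof (rule eq_matI)
    fix i n assume "i < dim_row (1\<^sub>m N :: real mat)" "n < dim_col (1\<^sub>m N :: real mat)"
    hence i: "i < N" and n: "n < N" by auto
    show "(?P * H) $$ (i,n) = 1\<^sub>m N $$ (i,n)"
      using P_mult[OF assms(1) i, of n H] i n assms(1) by (auto simp: H_def)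
  qed (auto simp: H_def permP_def)
  have cH: "H \<in> carrier_mat N N" by (simp add: H_def)
  have BA: "((1/2) \<cdot>\<^sub>m (?P * ?E * ?D * ?E)) * ?A = 1\<^sub>m N"
  proof -
    have "((1/2) \<cdot>\<^sub>m (?P * ?E * ?D * ?E)) * ?A = (1/2) \<cdot>\<^sub>m ((?P * ?E * ?D * ?E) * ?A)"
      using cA cP cE cD by (metis mult_carrier_mat mult_smult_assoc_mat)
    also have "(?P * ?E * ?D * ?E) * ?A = ?P * (?E * (?D * (?E * ?A)))"
      using cA cP cE cD by (simp add: assoc_mult_mat[of _ N N _ N _ N])
    also have "\<dots> = ?P * (2 \<cdot>\<^sub>m H)" using EA EF by simp
    also have "\<dots> = 2 \<cdot>\<^sub>m (?P * H)" using cP cH by (simp add: mult_smult_distrib)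
    also have "(1/2) \<cdot>\<^sub>m (2 \<cdot>\<^sub>m (?P * H)) = 1\<^sub>m N"
      unfolding PH by (rule eq_matI) auto
    finally show ?thesis .
  qed
  have cB: "(1/2) \<cdot>\<^sub>m (?P * ?E * ?D * ?E) \<in> carrier_mat N N" using cP cE cD by auto
  have AB: "?A * ((1/2) \<cdot>\<^sub>m (?P * ?E * ?D * ?E)) = 1\<^sub>m N"
    by (rule mat_mult_left_right_inverse[OF cB cA BA])
  have i1: "inverts_mat ?A ((1/2) \<cdot>\<^sub>m (?P * ?E * ?D * ?E))"
    using AB cA by (simp add: inverts_mat_def)
  have i2: "inverts_mat ((1/2) \<cdot>\<^sub>m (?P * ?E * ?D * ?E)) ?A"
    using BA cB cP by (simp add: inverts_mat_def)
  show ?thesis using i1 i2 cA unfolding invertible_mat_def square_mat.simps by auto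
qed

end
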